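(* Let $I=(0,1)$, $\nu>0$, $\gamma>1$, $\rho_0\in C(\bar I)$ with $\rho_0>0$ in $I$, $\rho_0=0$ on $\partial I$, and $v_0=u_0$ continuous on $\bar I$. Suppose that there exist positive $\lambda_1,\lambda_2,\lambda_3,\lambda_4$ with $0<\lambda_3,\lambda_4<1$ such that either ($\frac{(\rho_0)_x}{\rho_0}\ge\lambda_1$ in $(0,\lambda_3)$, $v_0(\lambda_3)<0$, $v_0\le0$ in $(0,\lambda_3)$) or ($\frac{(\rho_0)_x}{\rho_0}\le-\lambda_2$ in $(\lambda_4,1)$, $v_0(\lambda_4)>0$, $v_0\ge0$ in $(\lambda_4,1)$). Then for every $T>0$ the problem $$\rho_0 v_t+\Big(\frac{\rho_0^\gamma}{\eta_x^\gamma}\Big)_x=\nu\Big(\frac{v_x}{\eta_x}\Big)_x\ \text{ in } I\times(0,T],\qquad \eta_t=v,$$ $$(v,\eta)=(u_0,x)\text{ on }I\times\{t=0\},\qquad v=v_x=0\text{ on }\partial I\times(0,T],$$ has no solution $(v,\eta)$ in $C^{2,1}(\bar I\times[0,T])$.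
   Context: $C^{2,1}(\bar I\times[0,T])$ denotes functions that are $C^2$ in $x$ and $C^1$ in $t$ on $\bar I\times[0,T]$. *)

theory Defs
  imports "HOL-Analysis.Analysis"
begin

text \<open>Classical solution in \<open>C^{2,1}([0,1] \<times> [0,T])\<close> of the problem
  \<open>rho0 v_t + (rho0^gamma / eta_x^gamma)_x = nu (v_x / eta_x)_x\<close> in \<open>I \<times> (0,T]\<close>,
  \<open>eta_t = v\<close>, \<open>(v,eta) = (u0, x)\<close> at \<open>t = 0\<close>, \<open>v = v_x = 0\<close> on \<open>\<partial>I \<times> (0,T]\<close>.
  The functions vx, vxx, vt (resp. ex, exx, et) are the partial derivatives
  (one-sided at the boundary of the rectangle), required to be continuous on the
  closed rectangle, i.e. \<open>v, eta \<in> C^{2,1}\<close>.\<close>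

definition C21_with :: "real \<Rightarrow> (real \<Rightarrow> real \<Rightarrow> real) \<Rightarrow> (real \<Rightarrow> real \<Rightarrow> real)
    \<Rightarrow> (real \<Rightarrow> real \<Rightarrow> real) \<Rightarrow> (real \<Rightarrow> real \<Rightarrow> real) \<Rightarrow> bool" where
  "C21_with T f fx fxx ft \<longleftrightarrow>
     continuous_on ({0..1} \<times> {0..T}) (\<lambda>(x,t). f x t) \<and>
     continuous_on ({0..1} \<times> {0..T}) (\<lambda>(x,t). fx x t) \<and>
     continuous_on ({0..1} \<times> {0..T}) (\<lambda>(x,t). fxx x t) \<and>
     continuous_on ({0..1} \<times> {0..T}) (\<lambda>(x,t). ft x t) \<and>
     (\<forall>x\<in>{0..1}. \<forall>t\<in>{0..T}.
        ((\<lambda>y. f y t) has_real_derivative fx x t) (at x within {0..1}) \<and>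
        ((\<lambda>y. fx y t) has_real_derivative fxx x t) (at x within {0..1}) \<and>
        ((\<lambda>s. f x s) has_real_derivative ft x t) (at t within {0..T}))"

definition is_solution ::
  "real \<Rightarrow> real \<Rightarrow> real \<Rightarrow> (real \<Rightarrow> real) \<Rightarrow> (real \<Rightarrow> real)
     \<Rightarrow> (real \<Rightarrow> real \<Rightarrow> real) \<Rightarrow> (real \<Rightarrow> real \<Rightarrow> real) \<Rightarrow> bool" where
  "is_solution \<nu> \<gamma> T \<rho>0 u0 v \<eta> \<longleftrightarrow>
     (\<exists>vx vxx vt ex exx et.
        C21_with T v vx vxx vt \<and> C21_with T \<eta> ex exx et \<and>
        (\<forall>x\<in>{0<..<1}. \<forall>t\<in>{0<..T}.
           ex x t > 0 \<and>
           (\<exists>P Q.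
              ((\<lambda>y. (\<rho>0 y) powr \<gamma> / (ex y t) powr \<gamma>) has_real_derivative P) (at x) \<and>
              ((\<lambda>y. vx y t / ex y t) has_real_derivative Q) (at x) \<and>
              \<rho>0 x * vt x t + P = \<nu> * Q) \<and>
           et x t = v x t) \<and>
        (\<forall>x\<in>{0<..<1}. v x 0 = u0 x \<and> \<eta> x 0 = x) \<and>
        (\<forall>t\<in>{0<..T}. v 0 t = 0 \<and> v 1 t = 0 \<and> vx 0 t = 0 \<and> vx 1 t = 0))"

end

theory Submission
  imports Defs
begin

lemma deriv_at_int:
  fixes f :: "real \<Rightarrow> real"
  assumes "x \<in> {0<..<1}" "(f has_real_derivative D) (at x within {0..1})"
  shows "(f has_real_derivative D) (at x)"
proof -
  have "x \<in> interior {0..1::real}" using assms(1) by simp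
  then have "at x within {0..1} = at x" by (rule at_within_interior)
  with assms(2) show ?thesis by simp
qed

lemma deriv_at_int_T:
  fixes f :: "real \<Rightarrow> real"
  assumes "0 < t" "t < T" "(f has_real_derivative D) (at t within {0..T})"
  shows "(f has_real_derivative D) (at t)"
proof -
  have "t \<in> interior {0..T}" using assms by simp
  then have "at t within {0..T} = at t" by (rule at_within_interior)
  with assms(3) show ?thesis by simp
qed

lemma unif_small:
  fixes f :: "real \<Rightarrow> real \<Rightarrow> real"
  assumes "continuous_on ({0..1} \<times> {0..T}) (\<lambda>(x,t). f x t)" "e > 0" "T \<ge> 0"
  shows "\<exists>d>0. \<forall>x\<in>{0..1}. \<forall>t\<in>{0..T}. t < d \<longrightarrow> \<bar>f x t - f x 0\<bar> < e"
proof -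
  have "uniformly_continuous_on ({0..1} \<times> {0..T}) (\<lambda>(x,t). f x t)"
    by (rule compact_uniformly_continuous[OF assms(1)]) (intro compact_Times compact_Icc)
  then obtain d where d: "d > 0" and H: "\<forall>p\<in>{0..1} \<times> {0..T}. \<forall>q\<in>{0..1} \<times> {0..T}.
      dist q p < d \<longrightarrow> dist ((\<lambda>(x,t). f x t) q) ((\<lambda>(x,t). f x t) p) < e"
    unfolding uniformly_continuous_on_def using assms(2) by metis
  show ?thesis
  proof (intro exI[of _ d] conjI ballI impI d)
    fix x t assume x: "x \<in> {0..1::real}" and t: "t \<in> {0..T}" and td: "t < d"
    have "dist (x,t) (x,0) = \<bar>t\<bar>" by (simp add: dist_Pair_Pair dist_real_def)
    then have "dist (x,t) (x,0) < d" using t td by simp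
    moreover have "(x,t) \<in> {0..1} \<times> {0..T}" "(x,0) \<in> {0..1} \<times> {0..T}" using x t assms(3) by auto
    ultimately have "dist (f x t) (f x 0) < e" using H by fastforce
    then show "\<bar>f x t - f x 0\<bar> < e" by (simp add: dist_real_def)
  qed
qed

lemma corner_zero:
  fixes f :: "real \<Rightarrow> real \<Rightarrow> real"
  assumes "continuous_on ({0..1} \<times> {0..T}) (\<lambda>(x,t). f x t)" "T > 0"
    and "\<forall>t\<in>{0<..T}. f 0 t = 0"
  shows "f 0 0 = 0"
proof (rule ccontr)
  assume ne: "f 0 0 \<noteq> 0"
  obtain d where d: "d > 0" and H: "\<forall>x\<in>{0..1}. \<forall>t\<in>{0..T}. t < d \<longrightarrow> \<bar>f x t - f x 0\<bar> < \<bar>f 0 0\<bar>"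
    using unif_small[OF assms(1), of "\<bar>f 0 0\<bar>"] ne assms(2) by auto
  define t where "t = min (d/2) T"
  have "t \<in> {0<..T}" "t < d" using d assms(2) by (auto simp: t_def)
  then have "\<bar>f 0 t - f 0 0\<bar> < \<bar>f 0 0\<bar>" using H by auto
  with assms(3) \<open>t \<in> {0<..T}\<close> show False by simp
qed

lemma key_point:
  fixes v vx vxx vt ex exx :: "real \<Rightarrow> real \<Rightarrow> real" and \<rho>0 :: "real \<Rightarrow> real"
  assumes nu: "\<nu> > 0" and ga: "\<gamma> > 1" and l1: "lam1 > 0"
    and x: "0 < x" "x < a" "a < 1" and t: "s1 < t" "t < T" "0 \<le> s1"
    and eps: "\<epsilon> \<ge> 0"
    and dvx: "\<And>y. y \<in> {0<..<1} \<Longrightarrow> ((\<lambda>y. v y t) has_real_derivative vx y t) (at y)"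
    and dvxx: "((\<lambda>y. vx y t) has_real_derivative vxx x t) (at x)"
    and dvt: "((\<lambda>s. v x s) has_real_derivative vt x t) (at t)"
    and dex: "((\<lambda>y. ex y t) has_real_derivative exx x t) (at x)"
    and eq: "ex x t > 0 \<and> (\<exists>P Q.
              ((\<lambda>y. (\<rho>0 y) powr \<gamma> / (ex y t) powr \<gamma>) has_real_derivative P) (at x) \<and>
              ((\<lambda>y. vx y t / ex y t) has_real_derivative Q) (at x) \<and>
              \<rho>0 x * vt x t + P = \<nu> * Q)"
    and rpos: "\<rho>0 x > 0" and rB: "\<rho>0 x \<le> B" and B: "B > 0"
    and rder: "\<exists>D. (\<rho>0 has_real_derivative D) (at x) \<and> D \<ge> lam1 * \<rho>0 x"
    and exb: "1/2 < ex x t" "ex x t < 3/2" and exxb: "\<bar>exx x t\<bar> < 1/4" "\<bar>exx x t\<bar> < lam1/4"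
    and maxx: "\<forall>y\<in>{0..a}. v y t + \<epsilon> * (y^2 + y + (\<nu>/(64*B))*t - (\<nu>/(64*B))*t0)
                 \<le> v x t + \<epsilon> * (x^2 + x + (\<nu>/(64*B))*t - (\<nu>/(64*B))*t0)"
    and maxt: "\<forall>s\<in>{s1..t}. v x s + \<epsilon> * (x^2 + x + (\<nu>/(64*B))* s - (\<nu>/(64*B))*t0)
                 \<le> v x t + \<epsilon> * (x^2 + x + (\<nu>/(64*B))*t - (\<nu>/(64*B))*t0)"
  shows False
proof -
  define K where "K = \<nu>/(64*B)"
  have K: "K > 0" using nu B by (simp add: K_def)
  define w where "w = (\<lambda>y s. v y s + \<epsilon> * (y^2 + y + K* s - K*t0))"
  have maxx': "\<forall>y\<in>{0..a}. w y t \<le> w x t" using maxx by (simp add: w_def K_def)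
  have maxt': "\<forall>s\<in>{s1..t}. w x s \<le> w x t" using maxt by (simp add: w_def K_def)
  have dw: "((\<lambda>y. w y t) has_real_derivative vx y t + \<epsilon> * (2*y+1)) (at y)" if "y \<in> {0<..<1}" for y
    unfolding w_def using dvx[OF that] by (auto intro!: derivative_eq_intros)
  have i: "vx x t + \<epsilon> * (2*x+1) = 0"
  proof (rule DERIV_local_max[OF dw])
    show "x \<in> {0<..<1}" using x by auto
    show "0 < min x (a - x)" using x by auto
    show "\<forall>y. \<bar>x - y\<bar> < min x (a - x) \<longrightarrow> w y t \<le> w x t"
    proof (intro allI impI)
      fix y assume "\<bar>x - y\<bar> < min x (a - x)"
      then have "y \<in> {0..a}" by (auto simp: abs_if split: if_splits)
      then show "w y t \<le> w x t" using maxx' by blast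
    qed
  qed
  have ii: "vxx x t + 2*\<epsilon> \<le> 0"
  proof (rule ccontr)
    assume "\<not> ?thesis"
    then have pos: "vxx x t + 2*\<epsilon> > 0" by simp
    have dg: "((\<lambda>y. vx y t + \<epsilon> * (2*y+1)) has_real_derivative vxx x t + 2*\<epsilon>) (at x)"
      using dvxx by (auto intro!: derivative_eq_intros)
    obtain d where d: "d > 0" and dd: "\<forall>h>0. h < d \<longrightarrow> vx x t + \<epsilon> * (2*x+1) < vx (x+h) t + \<epsilon> * (2*(x+h)+1)"
      using DERIV_pos_inc_right[OF dg pos] by blast
    define h where "h = min d (a - x) / 2"
    have h: "h > 0" "h < d" "x + h < a" using d x unfolding h_def by (auto simp: min_def field_simps)
    obtain z where z: "x < z" "z < x + h" "w (x+h) t - w x t = (x + h - x) * (vx z t + \<epsilon> * (2*z+1))"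
      using MVT2[of x "x+h" "\<lambda>y. w y t" "\<lambda>y. vx y t + \<epsilon> * (2*y+1)"] h dw x by force
    have "vx z t + \<epsilon> * (2*z+1) > 0"
      using dd[rule_format, of "z - x"] z h i by auto
    then have "h * (vx z t + \<epsilon> * (2*z+1)) > 0" using h(1) by simp
    then have "w (x+h) t > w x t" using z(3) by simp
    moreover have "x + h \<in> {0..a}" using h x by auto
    ultimately show False using maxx' by fastforce
  qed
  have iii: "vt x t + \<epsilon> * K \<ge> 0"
  proof (rule ccontr)
    assume "\<not> ?thesis"
    then have neg: "vt x t + \<epsilon> * K < 0" by simp
    have dg: "((\<lambda>s. w x s) has_real_derivative vt x t + \<epsilon> * K) (at t)"
      unfolding w_def using dvt by (auto intro!: derivative_eq_intros)
    obtain d where d: "d > 0" and dd: "\<forall>h>0. h < d \<longrightarrow> w x t < w x (t - h)"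
      using DERIV_neg_dec_left[OF dg neg] by blast
    define h where "h = min d (t - s1) / 2"
    have h: "h > 0" "h < d" "t - h \<ge> s1" using d t unfolding h_def by (auto simp: min_def field_simps)
    then have "w x t < w x (t - h)" using dd by auto
    moreover have "t - h \<in> {s1..t}" using h by auto
    ultimately show False using maxt' by fastforce
  qed
  obtain P Q where dP: "((\<lambda>y. (\<rho>0 y) powr \<gamma> / (ex y t) powr \<gamma>) has_real_derivative P) (at x)"
    and dQ: "((\<lambda>y. vx y t / ex y t) has_real_derivative Q) (at x)"
    and E: "\<rho>0 x * vt x t + P = \<nu> * Q" using eq by blast
  define e where "e = ex x t"
  define r where "r = \<rho>0 x"
  define c where "c = exx x t"
  have e: "e > 1/2" "e < 3/2" using exb by (auto simp: e_def)
  have r: "r > 0" "r \<le> B" using rpos rB by (auto simp: r_def)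
  have dQ2: "((\<lambda>y. vx y t / ex y t) has_real_derivative (vxx x t * e - vx x t * c) / (e * e)) (at x)"
    unfolding e_def c_def using DERIV_divide[OF dvxx dex] exb by simp
  have Qv: "Q = (vxx x t * e - vx x t * c) / (e * e)" using DERIV_unique[OF dQ dQ2] .
  obtain D where dr: "(\<rho>0 has_real_derivative D) (at x)" and D: "D \<ge> lam1 * r"
    using rder r_def by blast
  have d1: "((\<lambda>y. (\<rho>0 y) powr \<gamma>) has_real_derivative \<gamma> * r powr (\<gamma> - 1) * D) (at x)"
    using DERIV_fun_powr[OF dr rpos, of \<gamma>] by (simp add: r_def)
  have d2: "((\<lambda>y. (ex y t) powr \<gamma>) has_real_derivative \<gamma> * e powr (\<gamma> - 1) * c) (at x)"
    using DERIV_fun_powr[OF dex, of \<gamma>] exb by (simp add: e_def c_def)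
  have epg: "e powr \<gamma> > 0" using e by simp
  have dP2: "((\<lambda>y. (\<rho>0 y) powr \<gamma> / (ex y t) powr \<gamma>) has_real_derivative
      ((\<gamma> * r powr (\<gamma> - 1) * D) * e powr \<gamma> - r powr \<gamma> * (\<gamma> * e powr (\<gamma> - 1) * c)) / (e powr \<gamma> * e powr \<gamma>)) (at x)"
    using DERIV_divide[OF d1 d2] epg by (simp add: r_def e_def)
  have Pv: "P = ((\<gamma> * r powr (\<gamma> - 1) * D) * e powr \<gamma> - r powr \<gamma> * (\<gamma> * e powr (\<gamma> - 1) * c)) / (e powr \<gamma> * e powr \<gamma>)"
    using DERIV_unique[OF dP dP2] .
  have rg: "r powr \<gamma> = r powr (\<gamma> - 1) * r" using r by (simp add: powr_diff)
  have eg: "e powr \<gamma> = e powr (\<gamma> - 1) * e" using e by (simp add: powr_diff)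
  have num: "(\<gamma> * r powr (\<gamma> - 1) * D) * e powr \<gamma> - r powr \<gamma> * (\<gamma> * e powr (\<gamma> - 1) * c)
      = \<gamma> * r powr (\<gamma> - 1) * e powr (\<gamma> - 1) * (D * e - r * c)" by (simp add: rg eg algebra_simps)
  have cb: "\<bar>c\<bar> < lam1/4" "\<bar>c\<bar> < 1/4" using exxb by (auto simp: c_def)
  have "D * e \<ge> lam1 * r * e" using D e by (simp add: mult_right_mono)
  moreover have "r * c \<le> r * (lam1/4)" using cb r by (intro mult_left_mono) auto
  moreover have "lam1 * r * e > r * (lam1/4)" using e r l1 by (simp add: mult_strict_left_mono)
  ultimately have "D * e - r * c > 0" by linarith
  moreover have "\<gamma> * r powr (\<gamma> - 1) * e powr (\<gamma> - 1) > 0" using r e ga by simp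
  ultimately have "P > 0" unfolding Pv num using epg by simp
  have vx: "vx x t = - \<epsilon> * (2*x+1)" using i by simp
  have "r * (vt x t + \<epsilon> * K) \<ge> 0" using iii r by simp
  then have "r * vt x t \<ge> - \<epsilon> * K * r" by (simp add: algebra_simps)
  moreover have "\<epsilon> * K * r \<le> \<epsilon> * K * B" using r eps K by (simp add: mult_left_mono)
  moreover have "\<epsilon> * K * B = \<epsilon> * \<nu> / 64" using B by (simp add: K_def)
  ultimately have lhs: "r * vt x t \<ge> - \<epsilon> * \<nu> / 64" by linarith
  have "(vxx x t + 2*\<epsilon>) * e \<le> 0" using ii e by (simp add: mult_nonpos_nonneg)
  then have "vxx x t * e \<le> -2*\<epsilon> * e" by (simp add: algebra_simps)
  moreover have "- vx x t * c \<le> \<epsilon> * 3 * (1/4)"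
  proof -
    have "- vx x t * c = \<epsilon> * (2*x+1) * c" using vx by simp
    also have "\<dots> \<le> \<epsilon> * (2*x+1) * \<bar>c\<bar>" using eps x by (intro mult_left_mono) auto
    also have "\<dots> \<le> \<epsilon> * 3 * (1/4)" using eps x cb
      by (intro mult_mono) auto
    finally show ?thesis .
  qed
  ultimately have "vxx x t * e - vx x t * c \<le> -2*\<epsilon>*e + \<epsilon>*3/4" by linarith
  moreover have "-2*\<epsilon>*e \<le> -\<epsilon>"
  proof -
    have "\<epsilon> * (2*e - 1) \<ge> 0" using eps e by simp
    then show ?thesis by (simp add: algebra_simps)
  qed
  ultimately have numq: "vxx x t * e - vx x t * c \<le> - \<epsilon> / 4" by linarith
  have "e * e < (3/2) * (3/2)" using e by (intro mult_strict_mono) auto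
  then have "e * e < 9/4" by simp
  have ee: "e * e > 0" using e by simp
  have "Q \<le> (-\<epsilon>/4) / (e*e)" unfolding Qv using divide_right_mono[OF numq, of "e*e"] ee by simp
  moreover have "(-\<epsilon>/4) / (e*e) \<le> (-\<epsilon>/4) / (9/4)"
    using eps ee \<open>e*e < 9/4\<close> by (intro divide_left_mono_neg) auto
  ultimately have "Q \<le> - \<epsilon> / 9" by simp
  then have "\<nu> * Q \<le> \<nu> * (- \<epsilon> / 9)" using nu by (intro mult_left_mono) auto
  then have "\<nu> * Q \<le> - \<epsilon> * \<nu> / 9" by (simp add: algebra_simps)
  with E lhs \<open>P > 0\<close> have "- \<epsilon> * \<nu> / 64 < - \<epsilon> * \<nu> / 9" by (simp add: r_def)
  moreover have "\<epsilon> * \<nu> \<ge> 0" using eps nu by simp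
  ultimately show False by linarith
qed

lemma core:
  fixes v vx vxx vt \<eta> ex exx et :: "real \<Rightarrow> real \<Rightarrow> real" and rho uu :: "real \<Rightarrow> real"
  assumes nu: "\<nu> > 0" and ga: "\<gamma> > 1" and T: "T > 0" and l1: "lam1 > 0"
    and a: "0 < a" "a < 1"
    and Cv: "C21_with T v vx vxx vt" and Ce: "C21_with T \<eta> ex exx et"
    and eqn: "\<forall>x\<in>{0<..<1}. \<forall>t\<in>{0<..T}.
           ex x t > 0 \<and>
           (\<exists>P Q.
              ((\<lambda>y. (rho y) powr \<gamma> / (ex y t) powr \<gamma>) has_real_derivative P) (at x) \<and>
              ((\<lambda>y. vx y t / ex y t) has_real_derivative Q) (at x) \<and>
              rho x * vt x t + P = \<nu> * Q) \<and>
           et x t = v x t"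
    and init: "\<forall>x\<in>{0<..<1}. v x 0 = uu x \<and> \<eta> x 0 = x"
    and bc: "\<forall>t\<in>{0<..T}. v 0 t = 0 \<and> vx 0 t = 0"
    and rc: "continuous_on {0..1} rho" and rp: "\<forall>x\<in>{0<..<1}. rho x > 0"
    and rd: "\<forall>x\<in>{0<..<a}. \<exists>D. (rho has_real_derivative D) (at x) \<and> D \<ge> lam1 * rho x"
    and ua: "uu a < 0" and un: "\<forall>x\<in>{0<..<a}. uu x \<le> 0"
  shows False
proof -
  define R where "R = {0..1::real} \<times> {0..T}"
  have cv: "continuous_on R (\<lambda>(x,t). v x t)" using Cv by (simp add: C21_with_def R_def)
  have cex: "continuous_on R (\<lambda>(x,t). ex x t)" using Ce by (simp add: C21_with_def R_def)
  have cexx: "continuous_on R (\<lambda>(x,t). exx x t)" using Ce by (simp add: C21_with_def R_def)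
  have dv: "\<And>x t. x \<in> {0..1} \<Longrightarrow> t \<in> {0..T} \<Longrightarrow>
        ((\<lambda>y. v y t) has_real_derivative vx x t) (at x within {0..1}) \<and>
        ((\<lambda>y. vx y t) has_real_derivative vxx x t) (at x within {0..1}) \<and>
        ((\<lambda>s. v x s) has_real_derivative vt x t) (at t within {0..T})"
    using Cv unfolding C21_with_def by blast
  have de: "\<And>x t. x \<in> {0..1} \<Longrightarrow> t \<in> {0..T} \<Longrightarrow>
        ((\<lambda>y. \<eta> y t) has_real_derivative ex x t) (at x within {0..1}) \<and>
        ((\<lambda>y. ex y t) has_real_derivative exx x t) (at x within {0..1})"
    using Ce unfolding C21_with_def by blast
  have ex0: "ex x 0 = 1" if x: "x \<in> {0<..<1}" for x
  proof -
    have "((\<lambda>y. \<eta> y 0) has_real_derivative ex x 0) (at x)"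
      using deriv_at_int[OF x] de[of x 0] x T by auto
    then have "((\<lambda>y. y) has_real_derivative ex x 0) (at x)"
      by (rule has_field_derivative_transform_within_open[where S="{0<..<1}"]) (use x init in auto)
    then show ?thesis using DERIV_ident DERIV_unique by blast
  qed
  have exx0: "exx x 0 = 0" if x: "x \<in> {0<..<1}" for x
  proof -
    have "((\<lambda>y. ex y 0) has_real_derivative exx x 0) (at x)"
      using deriv_at_int[OF x] de[of x 0] x T by auto
    then have "((\<lambda>y. 1) has_real_derivative exx x 0) (at x)"
      by (rule has_field_derivative_transform_within_open[where S="{0<..<1}"]) (use x ex0 in auto)
    then show ?thesis using DERIV_const DERIV_unique by blast
  qed
  obtain d1 where d1: "d1 > 0" and d1H: "\<forall>x\<in>{0..1}. \<forall>t\<in>{0..T}. t < d1 \<longrightarrow> \<bar>ex x t - ex x 0\<bar> < 1/2"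
    using unif_small[OF cex[unfolded R_def], of "1/2"] T by auto
  obtain d2 where d2: "d2 > 0" and d2H: "\<forall>x\<in>{0..1}. \<forall>t\<in>{0..T}. t < d2 \<longrightarrow> \<bar>exx x t - exx x 0\<bar> < min (1/4) (lam1/4)"
    using unif_small[OF cexx[unfolded R_def], of "min (1/4) (lam1/4)"] T l1 by auto
  obtain d3 where d3: "d3 > 0" and d3H: "\<forall>x\<in>{0..1}. \<forall>t\<in>{0..T}. t < d3 \<longrightarrow> \<bar>v x t - v x 0\<bar> < - uu a / 2"
    using unif_small[OF cv[unfolded R_def], of "- uu a / 2"] T ua by auto
  define \<tau> where "\<tau> = min (T/2) (min d1 (min d2 d3) / 2)"
  have tau: "0 < \<tau>" "\<tau> < T" "\<tau> < d1" "\<tau> < d2" "\<tau> < d3"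
    using T d1 d2 d3 by (auto simp: \<tau>_def min_def)
  have exb: "1/2 < ex x t \<and> ex x t < 3/2" if "x \<in> {0<..<1}" "t \<in> {0..\<tau>}" for x t
  proof -
    have "\<bar>ex x t - ex x 0\<bar> < 1/2" using d1H that tau by auto
    then show ?thesis using ex0[OF that(1)] unfolding abs_less_iff by (auto simp: min_def split: if_splits)
  qed
  have exxb: "\<bar>exx x t\<bar> < 1/4 \<and> \<bar>exx x t\<bar> < lam1/4" if "x \<in> {0<..<1}" "t \<in> {0..\<tau>}" for x t
  proof -
    have "\<bar>exx x t - exx x 0\<bar> < min (1/4) (lam1/4)" using d2H that tau by auto
    then show ?thesis using exx0[OF that(1)] unfolding abs_less_iff by (auto simp: min_def split: if_splits)
  qed
  have va: "v a 0 = uu a" using init a by auto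
  have vneg: "v a t < 0" if "t \<in> {0..\<tau>}" for t
  proof -
    have "\<bar>v a t - v a 0\<bar> < - uu a / 2" using d3H that tau a by auto
    then show ?thesis using va ua unfolding abs_less_iff by linarith
  qed
  obtain B0 where B0: "\<forall>y\<in>rho ` {0..1}. norm y \<le> B0"
    using compact_imp_bounded[OF compact_continuous_image[OF rc compact_Icc]] bounded_iff by metis
  define B where "B = \<bar>B0\<bar> + 1"
  have B: "B > 0" by (simp add: B_def)
  have rB: "rho x \<le> B" if "x \<in> {0..1}" for x using B0 that by (force simp: B_def)
  have key: False if x: "0 < x" "x < a" and t: "sa < t" "t \<le> \<tau>" "0 \<le> sa" and eps: "\<epsilon> \<ge> 0"
    and maxx: "\<forall>y\<in>{0..a}. v y t + \<epsilon> * (y^2 + y + (\<nu>/(64*B))*t - (\<nu>/(64*B))*t0)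
                 \<le> v x t + \<epsilon> * (x^2 + x + (\<nu>/(64*B))*t - (\<nu>/(64*B))*t0)"
    and maxt: "\<forall>s\<in>{sa..t}. v x s + \<epsilon> * (x^2 + x + (\<nu>/(64*B))* s - (\<nu>/(64*B))*t0)
                 \<le> v x t + \<epsilon> * (x^2 + x + (\<nu>/(64*B))*t - (\<nu>/(64*B))*t0)"
    for x t sa \<epsilon> t0
  proof -
    have x01: "x \<in> {0<..<1}" using x a by auto
    have tT: "t \<in> {0..T}" "t < T" "0 < t" using t tau by auto
    show False
    proof (rule key_point[OF nu ga l1 x a(2) t(1) tT(2) t(3) eps _ _ _ _ _ _ _ B])
      show "((\<lambda>y. v y t) has_real_derivative vx y t) (at y)" if "y \<in> {0<..<1}" for y
        using deriv_at_int[OF that] dv[of y t] that tT by auto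
      show "((\<lambda>y. vx y t) has_real_derivative vxx x t) (at x)"
        using deriv_at_int[OF x01] dv[of x t] x01 tT by auto
      show "((\<lambda>s. v x s) has_real_derivative vt x t) (at t)"
        using deriv_at_int_T[OF tT(3) tT(2)] dv[of x t] x01 tT by auto
      show "((\<lambda>y. ex y t) has_real_derivative exx x t) (at x)"
        using deriv_at_int[OF x01] de[of x t] x01 tT by auto
      show "ex x t > 0 \<and> (\<exists>P Q.
              ((\<lambda>y. (rho y) powr \<gamma> / (ex y t) powr \<gamma>) has_real_derivative P) (at x) \<and>
              ((\<lambda>y. vx y t / ex y t) has_real_derivative Q) (at x) \<and>
              rho x * vt x t + P = \<nu> * Q)" using eqn x01 tT by auto
      show "rho x > 0" using rp x01 by auto
      show "rho x \<le> B" using rB x01 by auto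
      show "\<exists>D. (rho has_real_derivative D) (at x) \<and> D \<ge> lam1 * rho x" using rd x by auto
      show "1/2 < ex x t" "ex x t < 3/2" using exb[of x t] x01 t tau by auto
      show "\<bar>exx x t\<bar> < 1/4" "\<bar>exx x t\<bar> < lam1/4" using exxb[of x t] x01 t tau by auto
    qed (use maxx maxt in auto)
  qed
  define D0 where "D0 = {0..a} \<times> {0..\<tau>}"
  have D0R: "D0 \<subseteq> R" using a tau by (auto simp: D0_def R_def)
  have v00: "v 0 0 = 0" using corner_zero[OF cv[unfolded R_def] T] bc by auto
  have step1: "v x t \<le> 0" if "x \<in> {0..a}" "t \<in> {0..\<tau>}" for x t
  proof -
    obtain p where p: "p \<in> D0" and pmax: "\<forall>q\<in>D0. (\<lambda>(x,t). v x t) q \<le> (\<lambda>(x,t). v x t) p"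
      using continuous_attains_sup[of D0 "\<lambda>(x,t). v x t"] continuous_on_subset[OF cv D0R] a tau
      by (auto simp: D0_def compact_Times)
    obtain xs ts where pe: "p = (xs, ts)" by fastforce
    have mx: "\<forall>y\<in>{0..a}. \<forall>s\<in>{0..\<tau>}. v y s \<le> v xs ts" using pmax pe by (auto simp: D0_def)
    have xs: "0 \<le> xs" "xs \<le> a" and ts: "0 \<le> ts" "ts \<le> \<tau>" using p pe by (auto simp: D0_def)
    have "v xs ts \<le> 0"
    proof (rule ccontr)
      assume pos: "\<not> v xs ts \<le> 0"
      consider "ts = 0" | "ts > 0 \<and> xs = 0" | "ts > 0 \<and> xs = a" | "ts > 0 \<and> 0 < xs \<and> xs < a"
        using xs ts by linarith
      then show False
      proof cases
        case 1
        then consider "xs = 0" | "xs = a" | "0 < xs \<and> xs < a" using xs by linarith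
        then show False
        proof cases
          case 1 then show False using pos v00 \<open>ts = 0\<close> by simp
        next
          case 2 then show False using pos vneg[of 0] tau \<open>ts = 0\<close> by simp
        next
          case 3 then show False using pos init un \<open>ts = 0\<close> a by auto
        qed
      next
        case 2 then show False using pos bc tau ts by auto
      next
        case 3 then show False using pos vneg[of ts] ts by auto
      next
        case 4
        show False
          by (rule key[where x=xs and t=ts and sa=0 and \<epsilon>=0]) (use 4 ts mx in auto)
      qed
    qed
    then show ?thesis using mx that by fastforce
  qed
  have step2: "v p q < 0" if "0 < p" "p < a" "0 < q" "q \<le> \<tau>" for p q
  proof (rule ccontr)
    assume "\<not> v p q < 0"
    then have z: "v p q = 0" using step1[of p q] that by auto
    show False
      by (rule key[where x=p and t=q and sa=0 and \<epsilon>=0]) (use that z step1 in auto)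
  qed
  define K where "K = \<nu>/(64*B)"
  have K: "K > 0" using nu B by (simp add: K_def)
  define x1 where "x1 = min (a/2) (K*\<tau>/4)"
  have x1b: "0 < x1" "x1 \<le> a/2" "x1 \<le> K*\<tau>/4" using a K tau by (auto simp: x1_def)
  define C where "C = {x1..a} \<times> {\<tau>/2..\<tau>}"
  have CR: "C \<subseteq> R" using a tau x1b by (auto simp: C_def R_def)
  obtain m where m: "m \<in> C" and mmax: "\<forall>q\<in>C. (\<lambda>(x,t). v x t) q \<le> (\<lambda>(x,t). v x t) m"
    using continuous_attains_sup[of C "\<lambda>(x,t). v x t"] continuous_on_subset[OF cv CR] x1b tau
    by (auto simp: C_def compact_Times)
  define \<mu> where "\<mu> = (\<lambda>(x,t). v x t) m"
  have mu: "\<mu> < 0"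
  proof -
    obtain xm tm where me: "m = (xm, tm)" by fastforce
    have "xm \<in> {x1..a}" "tm \<in> {\<tau>/2..\<tau>}" using m me by (auto simp: C_def)
    then have "v xm tm < 0"
      using step2[of xm tm] vneg[of tm] x1b tau by (cases "xm = a") auto
    then show ?thesis using me by (simp add: \<mu>_def)
  qed
  have vC: "v x t \<le> \<mu>" if "x \<in> {x1..a}" "t \<in> {\<tau>/2..\<tau>}" for x t
    using mmax that by (force simp: C_def \<mu>_def)
  define \<epsilon> where "\<epsilon> = min 1 (- \<mu> / 4)"
  have eps: "\<epsilon> > 0" "\<epsilon> \<le> - \<mu> / 4" using mu by (auto simp: \<epsilon>_def)
  define W where "W = (\<lambda>y s. v y s + \<epsilon> * (y^2 + y + K * s - K * \<tau>))"
  define D where "D = {0..a} \<times> {\<tau>/2..\<tau>}"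
  have DR: "D \<subseteq> R" using a tau by (auto simp: D_def R_def)
  have cW: "continuous_on D (\<lambda>(y,s). W y s)"
  proof -
    have "continuous_on D (\<lambda>(y,s). v y s)" using continuous_on_subset[OF cv DR] .
    moreover have "continuous_on D (\<lambda>(y::real,s::real). \<epsilon> * (y^2 + y + K * s - K * \<tau>))"
      by (auto intro!: continuous_intros simp: case_prod_beta)
    ultimately have "continuous_on D (\<lambda>p. (\<lambda>(y,s). v y s) p + (\<lambda>(y::real,s::real). \<epsilon> * (y^2 + y + K * s - K * \<tau>)) p)"
      by (rule continuous_on_add)
    then show ?thesis by (simp add: W_def case_prod_beta)
  qed
  have step3: "W y s \<le> 0" if "y \<in> {0..a}" "s \<in> {\<tau>/2..\<tau>}" for y s
  proof -
    obtain p where p: "p \<in> D" and pmax: "\<forall>q\<in>D. (\<lambda>(x,t). W x t) q \<le> (\<lambda>(x,t). W x t) p"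
      using continuous_attains_sup[of D "\<lambda>(x,t). W x t"] cW tau a
      by (auto simp: D_def compact_Times)
    obtain xs ts where pe: "p = (xs, ts)" by fastforce
    have mx: "\<forall>y\<in>{0..a}. \<forall>s\<in>{\<tau>/2..\<tau>}. W y s \<le> W xs ts" using pmax pe by (auto simp: D_def)
    have xs: "0 \<le> xs" "xs \<le> a" and ts: "\<tau>/2 \<le> ts" "ts \<le> \<tau>" using p pe by (auto simp: D_def)
    have hb: "xs^2 + xs + K * ts - K * \<tau> \<le> 2"
    proof -
      have "xs^2 \<le> 1" using xs a by (simp add: abs_square_le_1)
      moreover have "K * ts \<le> K * \<tau>" using K ts by simp
      ultimately show ?thesis using xs a by linarith
    qed
    have "W xs ts \<le> 0"
    proof (rule ccontr)
      assume pos: "\<not> W xs ts \<le> 0"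
      consider "x1 \<le> xs" | "xs < x1 \<and> xs = 0" | "xs < x1 \<and> 0 < xs \<and> ts = \<tau>/2" | "xs < x1 \<and> 0 < xs \<and> \<tau>/2 < ts"
        using xs ts by linarith
      then show False
      proof cases
        case 1
        have "v xs ts \<le> \<mu>" using vC 1 xs ts by auto
        moreover have "\<epsilon> * (xs^2 + xs + K * ts - K * \<tau>) \<le> \<epsilon> * 2"
          using hb eps by (intro mult_left_mono) auto
        ultimately show False using pos eps mu unfolding W_def by linarith
      next
        case 2
        have "v 0 ts = 0" using bc ts tau by auto
        moreover have "K * ts \<le> K * \<tau>" using K ts by simp
        ultimately have "W xs ts = \<epsilon> * (K * ts - K * \<tau>)" using 2 by (simp add: W_def)
        moreover have "\<epsilon> * (K * ts - K * \<tau>) \<le> 0" using eps \<open>K * ts \<le> K * \<tau>\<close>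
          by (simp add: mult_nonneg_nonpos)
        ultimately show False using pos by simp
      next
        case 3
        have vle: "v xs ts \<le> 0" using step1[of xs ts] xs ts tau by auto
        have "xs^2 \<le> xs" using 3 x1b a by (simp add: power2_eq_square mult_left_le_one_le)
        moreover have "K * ts = K * \<tau> / 2" using 3 by simp
        ultimately have "xs^2 + xs + K * ts - K * \<tau> \<le> 0" using 3 x1b by linarith
        then have "\<epsilon> * (xs^2 + xs + K * ts - K * \<tau>) \<le> 0" using eps by (simp add: mult_nonneg_nonpos)
        with vle show False using pos unfolding W_def by linarith
      next
        case 4
        show False
        proof (rule key[where x=xs and t=ts and sa="\<tau>/2" and \<epsilon>=\<epsilon> and t0=\<tau>])
          show "\<forall>y\<in>{0..a}. v y ts + \<epsilon> * (y^2 + y + (\<nu>/(64*B))*ts - (\<nu>/(64*B))*\<tau>)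
                 \<le> v xs ts + \<epsilon> * (xs^2 + xs + (\<nu>/(64*B))*ts - (\<nu>/(64*B))*\<tau>)"
            using mx ts by (auto simp: W_def K_def)
          show "\<forall>s\<in>{\<tau>/2..ts}. v xs s + \<epsilon> * (xs^2 + xs + (\<nu>/(64*B))* s - (\<nu>/(64*B))*\<tau>)
                 \<le> v xs ts + \<epsilon> * (xs^2 + xs + (\<nu>/(64*B))*ts - (\<nu>/(64*B))*\<tau>)"
            using mx xs ts by (auto simp: W_def K_def)
        qed (use 4 ts tau x1b eps in auto)
      qed
    qed
    then show ?thesis using mx that by fastforce
  qed
  have t0: "\<tau> \<in> {0<..T}" "\<tau> \<in> {0..T}" using tau by auto
  have dW: "((\<lambda>y. W y \<tau>) has_real_derivative vx 0 \<tau> + \<epsilon> * (2*0+1)) (at 0 within {0..1})"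
    unfolding W_def using conjunct1[OF dv[of 0 \<tau>]] t0 by (auto intro!: derivative_eq_intros)
  have vx0: "vx 0 \<tau> = 0" using bc t0 by auto
  have W0: "W 0 \<tau> = 0" using bc t0 by (simp add: W_def)
  have "((\<lambda>y. (W y \<tau> - W 0 \<tau>) / (y - 0)) \<longlongrightarrow> \<epsilon>) (at 0 within {0..1})"
    using dW vx0 by (simp add: has_field_derivative_iff)
  then have "eventually (\<lambda>y. 0 < (W y \<tau> - W 0 \<tau>) / (y - 0)) (at 0 within {0..1})"
    using eps by (intro order_tendstoD(1)) auto
  then obtain d where d: "d > 0" and dH: "\<forall>y\<in>{0..1}. y \<noteq> 0 \<and> dist y 0 < d \<longrightarrow> 0 < (W y \<tau> - W 0 \<tau>) / (y - 0)"
    unfolding eventually_at by blast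
  define y where "y = min (d/2) a"
  have y: "0 < y" "y \<le> a" "y < d" using d a by (auto simp: y_def)
  then have "0 < (W y \<tau> - W 0 \<tau>) / (y - 0)" using dH a by auto
  then have "W y \<tau> > 0" using y W0 by (simp add: zero_less_divide_iff)
  moreover have "W y \<tau> \<le> 0" using step3[of y \<tau>] y tau by auto
  ultimately show False by simp
qed

lemma C21_mirror:
  assumes "C21_with T f fx fxx ft"
  shows "C21_with T (\<lambda>y t. k - f (1-y) t) (\<lambda>y t. fx (1-y) t) (\<lambda>y t. - fxx (1-y) t) (\<lambda>y t. - ft (1-y) t)"
proof -
  define R where "R = {0..1::real} \<times> {0..T}"
  define g where "g = (\<lambda>(y::real,t::real). (1-y, t))"
  have cg: "continuous_on R g" unfolding g_def by (auto intro!: continuous_intros simp: case_prod_beta)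
  have gR: "g ` R \<subseteq> R" by (auto simp: g_def R_def)
  have cc: "continuous_on R (\<lambda>(y,t). h (1-y) t)" if "continuous_on R (\<lambda>(x,t). h x t)" for h :: "real \<Rightarrow> real \<Rightarrow> real"
  proof -
    have "continuous_on R ((\<lambda>(x,t). h x t) \<circ> g)"
      by (rule continuous_on_compose[OF cg continuous_on_subset[OF that gR]])
    then show ?thesis by (simp add: g_def comp_def case_prod_beta)
  qed
  have C: "continuous_on R (\<lambda>(x,t). f x t)" "continuous_on R (\<lambda>(x,t). fx x t)"
    "continuous_on R (\<lambda>(x,t). fxx x t)" "continuous_on R (\<lambda>(x,t). ft x t)"
    using assms by (auto simp: C21_with_def R_def)
  have c1: "continuous_on R (\<lambda>(y,t). k - f (1-y) t)"
    using continuous_on_diff[OF continuous_on_const cc[OF C(1)]] by (simp add: case_prod_beta)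
  have c2: "continuous_on R (\<lambda>(y,t). fx (1-y) t)" using cc[OF C(2)] .
  have c3: "continuous_on R (\<lambda>(y,t). - fxx (1-y) t)"
    using continuous_on_minus[OF cc[OF C(3)]] by (simp add: case_prod_beta)
  have c4: "continuous_on R (\<lambda>(y,t). - ft (1-y) t)"
    using continuous_on_minus[OF cc[OF C(4)]] by (simp add: case_prod_beta)
  have D: "\<And>x t. x \<in> {0..1} \<Longrightarrow> t \<in> {0..T} \<Longrightarrow>
        ((\<lambda>y. f y t) has_real_derivative fx x t) (at x within {0..1}) \<and>
        ((\<lambda>y. fx y t) has_real_derivative fxx x t) (at x within {0..1}) \<and>
        ((\<lambda>s. f x s) has_real_derivative ft x t) (at t within {0..T})"
    using assms unfolding C21_with_def by blast
  have img: "(\<lambda>y::real. 1 - y) ` {0..1} = {0..1}"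
    by (auto simp: image_iff intro!: bexI[where x="1 - _"])
  have dg: "((\<lambda>y::real. 1 - y) has_real_derivative -1) (at y within {0..1})" for y
    by (auto intro!: derivative_eq_intros)
  have chain: "((\<lambda>y. h (1-y)) has_real_derivative - h' (1-y)) (at y within {0..1})"
    if "(h has_real_derivative h' (1-y)) (at (1-y) within {0..1})" for h h' and y :: real
  proof -
    have "(h has_real_derivative h' (1-y)) (at ((\<lambda>y. 1-y) y) within ((\<lambda>y. 1-y) ` {0..1}))"
      using that img by simp
    from DERIV_image_chain[OF this dg] show ?thesis by (simp add: comp_def)
  qed
  show ?thesis unfolding C21_with_def
  proof (intro conjI ballI)
    show "continuous_on ({0..1} \<times> {0..T}) (\<lambda>(x, t). k - f (1 - x) t)" using c1 by (simp add: R_def)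
    show "continuous_on ({0..1} \<times> {0..T}) (\<lambda>(x, t). fx (1 - x) t)" using c2 by (simp add: R_def)
    show "continuous_on ({0..1} \<times> {0..T}) (\<lambda>(x, t). - fxx (1 - x) t)" using c3 by (simp add: R_def)
    show "continuous_on ({0..1} \<times> {0..T}) (\<lambda>(x, t). - ft (1 - x) t)" using c4 by (simp add: R_def)
    fix x t assume x: "x \<in> {0..1::real}" and t: "t \<in> {0..T}"
    have x': "1 - x \<in> {0..1}" using x by auto
    have "((\<lambda>y. f (1-y) t) has_real_derivative - fx (1-x) t) (at x within {0..1})"
      using chain[of "\<lambda>z. f z t" "\<lambda>z. fx z t" x] D[OF x' t] by simp
    then show "((\<lambda>y. k - f (1 - y) t) has_real_derivative fx (1 - x) t) (at x within {0..1})"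
      using DERIV_diff[OF DERIV_const] by fastforce
    show "((\<lambda>y. fx (1 - y) t) has_real_derivative - fxx (1 - x) t) (at x within {0..1})"
      using chain[of "\<lambda>z. fx z t" "\<lambda>z. fxx z t" x] D[OF x' t] by simp
    show "((\<lambda>s. k - f (1 - x) s) has_real_derivative - ft (1 - x) t) (at t within {0..T})"
      using DERIV_diff[OF DERIV_const conjunct2[OF conjunct2[OF D[OF x' t]]]] by simp
  qed
qed

theorem theorem2p2:
  fixes \<nu> \<gamma> :: real and \<rho>0 u0 v0 :: "real \<Rightarrow> real"
    and lam1 lam2 lam3 lam4 :: real
  assumes "\<nu> > 0" and "\<gamma> > 1"
    and "continuous_on {0..1} \<rho>0"
    and "\<forall>x\<in>{0<..<1}. \<rho>0 x > 0" and "\<rho>0 0 = 0" and "\<rho>0 1 = 0"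
    and "v0 = u0" and "continuous_on {0..1} v0"
    and "lam1 > 0" and "lam2 > 0" and "0 < lam3" and "lam3 < 1" and "0 < lam4" and "lam4 < 1"
    and "((\<forall>x\<in>{0<..<lam3}. \<rho>0 differentiable (at x) \<and> deriv \<rho>0 x / \<rho>0 x \<ge> lam1)
           \<and> v0 lam3 < 0 \<and> (\<forall>x\<in>{0<..<lam3}. v0 x \<le> 0))
       \<or> ((\<forall>x\<in>{lam4<..<1}. \<rho>0 differentiable (at x) \<and> deriv \<rho>0 x / \<rho>0 x \<le> - lam2)
           \<and> v0 lam4 > 0 \<and> (\<forall>x\<in>{lam4<..<1}. v0 x \<ge> 0))"
  shows "\<forall>T>0. \<not> (\<exists>v \<eta>. is_solution \<nu> \<gamma> T \<rho>0 u0 v \<eta>)"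
proof (intro allI impI notI)
  fix T :: real assume T: "T > 0"
  assume "\<exists>v \<eta>. is_solution \<nu> \<gamma> T \<rho>0 u0 v \<eta>"
  then obtain v \<eta> vx vxx vt ex exx et where
    Cv: "C21_with T v vx vxx vt" and Ce: "C21_with T \<eta> ex exx et"
    and eqn: "\<forall>x\<in>{0<..<1}. \<forall>t\<in>{0<..T}.
           ex x t > 0 \<and>
           (\<exists>P Q.
              ((\<lambda>y. (\<rho>0 y) powr \<gamma> / (ex y t) powr \<gamma>) has_real_derivative P) (at x) \<and>
              ((\<lambda>y. vx y t / ex y t) has_real_derivative Q) (at x) \<and>
              \<rho>0 x * vt x t + P = \<nu> * Q) \<and>
           et x t = v x t"
    and init: "\<forall>x\<in>{0<..<1}. v x 0 = u0 x \<and> \<eta> x 0 = x"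
    and bc: "\<forall>t\<in>{0<..T}. v 0 t = 0 \<and> v 1 t = 0 \<and> vx 0 t = 0 \<and> vx 1 t = 0"
    unfolding is_solution_def by blast
  from assms(15) show False
  proof
    assume H: "(\<forall>x\<in>{0<..<lam3}. \<rho>0 differentiable (at x) \<and> deriv \<rho>0 x / \<rho>0 x \<ge> lam1)
           \<and> v0 lam3 < 0 \<and> (\<forall>x\<in>{0<..<lam3}. v0 x \<le> 0)"
    show False
    proof (rule core[OF assms(1,2) T assms(9) assms(11,12) Cv Ce eqn init _ assms(3,4)])
      show "\<forall>t\<in>{0<..T}. v 0 t = 0 \<and> vx 0 t = 0" using bc by auto
      show "u0 lam3 < 0" "\<forall>x\<in>{0<..<lam3}. u0 x \<le> 0" using H assms(7) by auto
      show "\<forall>x\<in>{0<..<lam3}. \<exists>D. (\<rho>0 has_real_derivative D) (at x) \<and> D \<ge> lam1 * \<rho>0 x"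
      proof
        fix x assume x: "x \<in> {0<..<lam3}"
        then have rp: "\<rho>0 x > 0" using assms(4,12) by auto
        have "\<rho>0 differentiable (at x)" "deriv \<rho>0 x / \<rho>0 x \<ge> lam1" using H x by auto
        then show "\<exists>D. (\<rho>0 has_real_derivative D) (at x) \<and> D \<ge> lam1 * \<rho>0 x"
          using rp by (intro exI[of _ "deriv \<rho>0 x"])
            (auto simp: DERIV_deriv_iff_real_differentiable pos_le_divide_eq)
      qed
    qed
  next
    assume H: "(\<forall>x\<in>{lam4<..<1}. \<rho>0 differentiable (at x) \<and> deriv \<rho>0 x / \<rho>0 x \<le> - lam2)
           \<and> v0 lam4 > 0 \<and> (\<forall>x\<in>{lam4<..<1}. v0 x \<ge> 0)"
    show False
    proof (rule core[where rho="\<lambda>y. \<rho>0 (1-y)" and uu="\<lambda>y. - u0 (1-y)" and a="1-lam4",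
          OF assms(1,2) T assms(10) _ _ C21_mirror[OF Cv, of 0] C21_mirror[OF Ce, of 1]])
      show "0 < 1 - lam4" "1 - lam4 < 1" using assms(13,14) by auto
      show "\<forall>t\<in>{0<..T}. 0 - v (1 - 0) t = 0 \<and> vx (1 - 0) t = 0" using bc by auto
      show "\<forall>x\<in>{0<..<1}. 0 - v (1 - x) 0 = - u0 (1 - x) \<and> 1 - \<eta> (1 - x) 0 = x" using init by auto
      show "continuous_on {0..1} (\<lambda>y. \<rho>0 (1 - y))"
      proof -
        have "continuous_on {0..1} (\<rho>0 \<circ> (\<lambda>y. 1 - y))"
          by (rule continuous_on_compose) (auto intro!: continuous_intros continuous_on_subset[OF assms(3)])
        then show ?thesis by (simp add: comp_def)
      qed
      show "\<forall>x\<in>{0<..<1}. 0 < \<rho>0 (1 - x)" using assms(4) by auto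
      show "- u0 (1 - (1 - lam4)) < 0" using H assms(7) by auto
      show "\<forall>x\<in>{0<..<1 - lam4}. - u0 (1 - x) \<le> 0" using H assms(7) by auto
      show "\<forall>x\<in>{0<..<1 - lam4}. \<exists>D. ((\<lambda>y. \<rho>0 (1 - y)) has_real_derivative D) (at x) \<and> lam2 * \<rho>0 (1 - x) \<le> D"
      proof
        fix y assume y: "y \<in> {0<..<1 - lam4}"
        define x where "x = 1 - y"
        have x: "x \<in> {lam4<..<1}" using y by (auto simp: x_def)
        then have rp: "\<rho>0 x > 0" using assms(4,13) by auto
        have "\<rho>0 differentiable (at x)" and q: "deriv \<rho>0 x / \<rho>0 x \<le> - lam2" using H x by auto
        then have dr: "(\<rho>0 has_real_derivative deriv \<rho>0 x) (at x)"
          by (simp add: DERIV_deriv_iff_real_differentiable)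
        have "((\<lambda>y. \<rho>0 (1 - y)) has_real_derivative deriv \<rho>0 x * (-1)) (at y)"
        proof -
          have g: "((\<lambda>y::real. 1 - y) has_real_derivative -1) (at y)" by (auto intro!: derivative_eq_intros)
          have dr': "(\<rho>0 has_real_derivative deriv \<rho>0 x) (at ((\<lambda>y. 1 - y) y))" using dr by (simp add: x_def)
          show ?thesis using DERIV_chain2[OF dr' g] by simp
        qed
        moreover have "lam2 * \<rho>0 x \<le> deriv \<rho>0 x * (-1)" using q rp by (simp add: divide_le_eq)
        ultimately show "\<exists>D. ((\<lambda>y. \<rho>0 (1 - y)) has_real_derivative D) (at y) \<and> lam2 * \<rho>0 (1 - y) \<le> D"
          by (auto simp: x_def)
      qed
      show "\<forall>x\<in>{0<..<1}. \<forall>t\<in>{0<..T}.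
           0 < ex (1 - x) t \<and>
           (\<exists>P Q. ((\<lambda>y. \<rho>0 (1 - y) powr \<gamma> / ex (1 - y) t powr \<gamma>) has_real_derivative P) (at x) \<and>
                  ((\<lambda>y. vx (1 - y) t / ex (1 - y) t) has_real_derivative Q) (at x) \<and>
                  \<rho>0 (1 - x) * - vt (1 - x) t + P = \<nu> * Q) \<and>
           - et (1 - x) t = 0 - v (1 - x) t"
      proof (intro ballI)
        fix y t assume y: "y \<in> {0<..<1::real}" and t: "t \<in> {0<..T}"
        have x: "1 - y \<in> {0<..<1}" using y by auto
        obtain P Q where e1: "ex (1-y) t > 0"
          and dP: "((\<lambda>z. (\<rho>0 z) powr \<gamma> / (ex z t) powr \<gamma>) has_real_derivative P) (at (1-y))"
          and dQ: "((\<lambda>z. vx z t / ex z t) has_real_derivative Q) (at (1-y))"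
          and E: "\<rho>0 (1-y) * vt (1-y) t + P = \<nu> * Q" and et: "et (1-y) t = v (1-y) t"
          using eqn x t by blast
        have g: "((\<lambda>y::real. 1 - y) has_real_derivative -1) (at y)" by (auto intro!: derivative_eq_intros)
        have dP': "((\<lambda>y. \<rho>0 (1 - y) powr \<gamma> / ex (1 - y) t powr \<gamma>) has_real_derivative P * (-1)) (at y)"
          using DERIV_chain2[OF dP g] by simp
        have dQ': "((\<lambda>y. vx (1 - y) t / ex (1 - y) t) has_real_derivative Q * (-1)) (at y)"
          using DERIV_chain2[OF dQ g] by simp
        show "0 < ex (1 - y) t \<and>
           (\<exists>P Q. ((\<lambda>y. \<rho>0 (1 - y) powr \<gamma> / ex (1 - y) t powr \<gamma>) has_real_derivative P) (at y) \<and>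
                  ((\<lambda>y. vx (1 - y) t / ex (1 - y) t) has_real_derivative Q) (at y) \<and>
                  \<rho>0 (1 - y) * - vt (1 - y) t + P = \<nu> * Q) \<and>
           - et (1 - y) t = 0 - v (1 - y) t"
        proof (intro conjI)
          show "0 < ex (1 - y) t" using e1 .
          show "- et (1 - y) t = 0 - v (1 - y) t" using et by simp
          have "\<rho>0 (1 - y) * - vt (1 - y) t + P * (-1) = \<nu> * (Q * (-1))" using E by (simp add: algebra_simps)
          with dP' dQ' show "\<exists>P Q. ((\<lambda>y. \<rho>0 (1 - y) powr \<gamma> / ex (1 - y) t powr \<gamma>) has_real_derivative P) (at y) \<and>
                  ((\<lambda>y. vx (1 - y) t / ex (1 - y) t) has_real_derivative Q) (at y) \<and>
                  \<rho>0 (1 - y) * - vt (1 - y) t + P = \<nu> * Q" by blast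
        qed
      qed
    qed
  qed
qed

end
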